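(* For any $\gamma_x \ge 0$ and $\gamma_\theta \ge 0$, along the momentum-enriched flow the function $\mathcal{F}_t := \mathcal{F}(\theta_t, m_t, q_t)$ satisfies $$\frac{\mathrm{d}}{\mathrm{d}t}\mathcal{F}_t = -\gamma_\theta \|\nabla_{m}\mathcal{F}(\theta_t,m_t,q_t)\|^2 - \gamma_x \|\nabla_{u}\delta_{q}\mathcal{F}[\theta_t,m_t,q_t]\|^2_{L^2(q_t)} \le 0,$$ where $\|f\|^2_{L^2(q)} := \int \|f(x,u)\|^2 \, q(x,u)\,\mathrm{d}x\,\mathrm{d}u$. In particular $\mathcal{F}_t$ is non-increasing in $t$.
   Context: Consider a latent variable model $p_\theta(y,x)$ with parameters $\theta\in\mathbb{R}^{d_\theta}$, latent variables $x\in\mathbb{R}^{d_x}$ and fixed observed data $y$. Introduce momentum variables $m\in\mathbb{R}^{d_\theta}$ and $u\in\mathbb{R}^{d_x}$, hyperparameters $\eta_\theta,\eta_x>0$, $r_{\eta_x}:=\mathcal{N}(0,\eta_x^{-1}I_{d_x})$, and $\rho_{\theta,\eta_x}(x,u):=p_\theta(y,x)\,r_{\eta_x}(u)$. For $q\in\mathcal{P}(\mathbb{R}^{2d_x})$ (probability densities on $(x,u)$-space with finite second moment), define $$\mathcal{F}(\theta,m,q):=\int \log\Big(\frac{q(x,u)}{\rho_{\theta,\eta_x}(x,u)}\Big)\,q(x,u)\,\mathrm{d}x\,\mathrm{d}u + \frac{\eta_\theta}{2}\|m\|^2 .$$ Its first variation in $q$ is $\delta_q\mathcal{F}[\theta,m,q](x,u)=\log\frac{q(x,u)}{\rho_{\theta,\eta_x}(x,u)}+1$,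 and $\nabla_m\mathcal{F}=\eta_\theta m$. For $\gamma\ge 0$ let $\mathsf{D}_\gamma:=\begin{pmatrix}0 & -I\\ I & \gamma I\end{pmatrix}$ (with identity blocks of the appropriate dimension). The momentum-enriched flow $(\theta_t,m_t,q_t)_{t\ge0}$ is defined by the damped Hamiltonian dynamics $$(\dot\theta_t,\dot m_t) = -\mathsf{D}_{\gamma_\theta}\nabla_{(\theta,m)}\mathcal{F}(\theta_t,m_t,q_t),\qquad \dot q_t = \nabla_{(x,u)}\cdot\big(q_t\,\mathsf{D}_{\gamma_x}\nabla_{(x,u)}\delta_q\mathcal{F}[\theta_t,m_t,q_t]\big),$$ equivalently the Fokker–Planck equation of the McKean–Vlasov SDE $\mathrm{d}\theta_t=\eta_\theta m_t\,\mathrm{d}t$, $\mathrm{d}m_t=[\int\nabla_\theta \log p_{\theta_t}(y,x)\,q_{t,X}(\mathrm{d}x)-\gamma_\theta\eta_\theta m_t]\mathrm{d}t$, $\mathrm{d}X_t=\eta_x U_t\,\mathrm{d}t$, $\mathrm{d}U_t=[\nabla_x\log p_{\theta_t}(y,X_t)-\gamma_x\eta_x U_t]\mathrm{d}t+\sqrt{2\gamma_x}\,\mathrm{d}W_t$, with $q_t=\mathrm{Law}(X_t,U_t)$ and $q_{t,X}$ its $x$-marginal. *)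

theory Defs
  imports "HOL-Analysis.Analysis"
begin

definition grad :: "('a::real_inner \<Rightarrow> real) \<Rightarrow> 'a \<Rightarrow> 'a" where
  "grad f z = (SOME g. GDERIV f z :> g)"

definition divg :: "('a::euclidean_space \<Rightarrow> 'a) \<Rightarrow> 'a \<Rightarrow> real" where
  "divg V z = (\<Sum>b\<in>Basis. frechet_derivative V (at z) b \<bullet> b)"

text \<open>The matrix D_gamma = [[0, -I], [I, gamma I]] acting on pairs (a, b).\<close>
definition Dmat :: "real \<Rightarrow> 'a::real_vector \<times> 'a \<Rightarrow> 'a \<times> 'a" where
  "Dmat \<gamma> v = (- snd v, fst v + \<gamma> *\<^sub>R snd v)"

definition gauss :: "real \<Rightarrow> 'a::euclidean_space \<Rightarrow> real" where
  "gauss \<eta> u = (\<eta> / (2 * pi)) powr (real DIM('a) / 2) * exp (- \<eta> * norm u ^ 2 / 2)"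

text \<open>rho_{theta,eta_x}(x,u) = p_theta(y,x) r_{eta_x}(u); the observed data y is fixed
  and absorbed into p, so p theta x stands for p_theta(y,x).\<close>
definition rho :: "('p \<Rightarrow> 'x \<Rightarrow> real) \<Rightarrow> real \<Rightarrow> 'p \<Rightarrow> 'x::euclidean_space \<times> 'x \<Rightarrow> real" where
  "rho p \<eta>x \<theta> z = p \<theta> (fst z) * gauss \<eta>x (snd z)"

definition Fcal :: "('p \<Rightarrow> 'x \<Rightarrow> real) \<Rightarrow> real \<Rightarrow> real \<Rightarrow> 'p \<Rightarrow> 'p::real_normed_vector
      \<Rightarrow> ('x::euclidean_space \<times> 'x \<Rightarrow> real) \<Rightarrow> real" where
  "Fcal p \<eta>x \<eta>\<theta> \<theta> m q =
     (\<integral>z. ln (q z / rho p \<eta>x \<theta> z) * q z \<partial>lborel) + \<eta>\<theta> / 2 * norm m ^ 2"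

definition deltaF :: "('p \<Rightarrow> 'x \<Rightarrow> real) \<Rightarrow> real \<Rightarrow> 'p
      \<Rightarrow> ('x::euclidean_space \<times> 'x \<Rightarrow> real) \<Rightarrow> 'x \<times> 'x \<Rightarrow> real" where
  "deltaF p \<eta>x \<theta> q z = ln (q z / rho p \<eta>x \<theta> z) + 1"

definition grad_theta :: "('p::real_inner \<Rightarrow> 'x \<Rightarrow> real) \<Rightarrow> 'p \<Rightarrow> 'x \<Rightarrow> 'p" where
  "grad_theta p \<theta> x = grad (\<lambda>\<theta>'. ln (p \<theta>' x)) \<theta>"

definition flux :: "('p \<Rightarrow> 'x \<Rightarrow> real) \<Rightarrow> real \<Rightarrow> real \<Rightarrow> 'p
      \<Rightarrow> ('x::euclidean_space \<times> 'x \<Rightarrow> real) \<Rightarrow> 'x \<times> 'x \<Rightarrow> 'x \<times> 'x" where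
  "flux p \<eta>x \<gamma>x \<theta> q z = q z *\<^sub>R Dmat \<gamma>x (grad (deltaF p \<eta>x \<theta> q) z)"

text \<open>The momentum-enriched flow on t \<ge> 0 (derivatives at t taken within [0,\<infinity>)):
  (theta', m') = - D_{gamma_theta} grad_{(theta,m)} F, written out explicitly
  (grad_theta F = - \<integral> grad_theta log p q, grad_m F = eta_theta m), and the PDE
  d/dt q_t = div (q_t D_{gamma_x} grad deltaF) holding pointwise (classical sense).
  The integral against the x-marginal q_{t,X} is written as the integral against q_t.\<close>
definition momentum_flow ::
  "('p::euclidean_space \<Rightarrow> 'x \<Rightarrow> real) \<Rightarrow> real \<Rightarrow> real \<Rightarrow> real \<Rightarrow> real
   \<Rightarrow> (real \<Rightarrow> 'p) \<Rightarrow> (real \<Rightarrow> 'p) \<Rightarrow> (real \<Rightarrow> 'x::euclidean_space \<times> 'x \<Rightarrow> real) \<Rightarrow> bool" where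
  "momentum_flow p \<eta>\<theta> \<eta>x \<gamma>\<theta> \<gamma>x \<theta> m q \<longleftrightarrow>
     (\<forall>t\<ge>0.
        (\<theta> has_vector_derivative (\<eta>\<theta> *\<^sub>R m t)) (at t within {0..}) \<and>
        (m has_vector_derivative
           ((\<integral>z. q t z *\<^sub>R grad_theta p (\<theta> t) (fst z) \<partial>lborel) - (\<gamma>\<theta> * \<eta>\<theta>) *\<^sub>R m t))
          (at t within {0..}) \<and>
        (\<forall>z. ((\<lambda>s. q s z) has_real_derivative divg (flux p \<eta>x \<gamma>x (\<theta> t) (q t)) z)
               (at t within {0..})))"

end

theory Submission
  imports Defs
begin

lemma lborel_translate:
  fixes f :: "'a::euclidean_space \<Rightarrow> 'b::{banach, second_countable_topology}"
  assumes "integrable lborel f"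
  shows "integrable lborel (\<lambda>z. f (c + z))" "(\<integral>z. f (c + z) \<partial>lborel) = integral\<^sup>L lborel f"
proof -
  have m: "f \<in> borel_measurable borel" using assms by auto
  have "integrable (distr lborel borel ((+) c)) f" using assms by (simp add: lborel_distr_plus)
  then show "integrable lborel (\<lambda>z. f (c + z))"
    by (subst (asm) integrable_distr_eq) (use m in auto)
  have "integral\<^sup>L lborel f = integral\<^sup>L (distr lborel borel ((+) c)) f" by (simp add: lborel_distr_plus)
  also have "\<dots> = (\<integral>z. f (c + z) \<partial>lborel)" by (rule integral_distr) (use m in auto)
  finally show "(\<integral>z. f (c + z) \<partial>lborel) = integral\<^sup>L lborel f" by simp
qed

lemma line_integral_zero:
  fixes W D :: "'a::euclidean_space \<Rightarrow> real" and b :: 'a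
  assumes dW: "\<And>z s. ((\<lambda>s. W (z + s *\<^sub>R b)) has_real_derivative D (z + s *\<^sub>R b)) (at s)"
    and iW: "integrable lborel W" and iD: "integrable lborel D"
  shows "integral\<^sup>L lborel D = 0"
proof -
  have mD[measurable]: "D \<in> borel_measurable borel" using iD by auto
  define G where "G = (\<lambda>(s::real) z. indicator {0..1} s * D (z + s *\<^sub>R b))"
  have mG: "case_prod G \<in> borel_measurable (lborel \<Otimes>\<^sub>M lborel)"
    unfolding G_def by measurable
  have tr: "integrable lborel (\<lambda>z. D (z + s *\<^sub>R b))" "(\<integral>z. D (z + s *\<^sub>R b) \<partial>lborel) = integral\<^sup>L lborel D" for s
    using lborel_translate[OF iD, of "s *\<^sub>R b"] by (simp_all add: add.commute)
  have trn: "(\<integral>z. \<bar>D (z + s *\<^sub>R b)\<bar> \<partial>lborel) = (\<integral>z. \<bar>D z\<bar> \<partial>lborel)" for s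
    using lborel_translate[OF integrable_norm[OF iD], of "s *\<^sub>R b"] by (simp add: add.commute)
  have ind: "integrable lborel (indicator {0..1::real} :: real \<Rightarrow> real)"
    by (simp add: integrable_indicator_iff)
  have intG: "integrable (lborel \<Otimes>\<^sub>M lborel) (case_prod G)"
  proof (rule lborel_pair.Fubini_integrable)
    show "case_prod G \<in> borel_measurable (lborel \<Otimes>\<^sub>M lborel)" by (rule mG)
    have "(\<lambda>s. \<integral>z. norm (case_prod G (s, z)) \<partial>lborel) = (\<lambda>s. indicator {0..1} s * (\<integral>z. \<bar>D z\<bar> \<partial>lborel))"
      by (rule ext) (simp add: G_def abs_mult trn)
    then show "integrable lborel (\<lambda>s. \<integral>z. norm (case_prod G (s, z)) \<partial>lborel)"
      using ind by (simp add: integrable_mult_left)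
    show "AE s in lborel. integrable lborel (\<lambda>z. case_prod G (s, z))"
      by (simp add: G_def tr)
  qed
  have R: "(\<integral>s. (\<integral>z. G s z \<partial>lborel) \<partial>lborel) = integral\<^sup>L lborel D"
    by (simp add: G_def tr)
  have AEi: "AE z in lborel. integrable lborel (\<lambda>s. G s z)"
    using lborel_pair.AE_integrable_snd[OF intG] .
  have L: "(\<integral>z. (\<integral>s. G s z \<partial>lborel) \<partial>lborel) = (\<integral>z. W (z + b) - W z \<partial>lborel)"
  proof (rule integral_cong_AE)
    show "AE z in lborel. (\<integral>s. G s z \<partial>lborel) = W (z + b) - W z"
      using AEi
    proof eventually_elim
      case (elim z)
      define c where "c = (\<integral>s. G s z \<partial>lborel)"
      have hU: "((\<lambda>s. G s z) has_integral c) UNIV"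
        unfolding c_def by (rule has_integral_integral_lborel[OF elim])
      have eqG: "(\<lambda>s. G s z) = (\<lambda>x. if x \<in> {0..1} then D (z + x *\<^sub>R b) else 0)"
        by (auto simp: G_def indicator_def)
      have h1: "((\<lambda>s. D (z + s *\<^sub>R b)) has_integral c) {0..1}"
        using hU unfolding eqG by (simp only: has_integral_restrict_UNIV)
      have "((\<lambda>s. D (z + s *\<^sub>R b)) has_integral (W (z + 1 *\<^sub>R b) - W (z + 0 *\<^sub>R b))) {0..1}"
        by (rule fundamental_theorem_of_calculus)
           (auto intro!: has_field_derivative_at_within dW simp: has_real_derivative_iff_has_vector_derivative[symmetric])
      from has_integral_unique[OF h1 this] have "c = W (z + b) - W z" by simp
      then show ?case unfolding c_def .
    qed
    show "(\<lambda>z. \<integral>s. G s z \<partial>lborel) \<in> borel_measurable lborel"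
      using lborel_pair.integrable_snd[OF intG] by auto
    show "(\<lambda>z. W (z + b) - W z) \<in> borel_measurable lborel" using iW
      by (intro borel_measurable_integrable integrable_diff) (auto simp: lborel_translate(1)[OF iW, of b, simplified add.commute])
  qed
  have "(\<integral>z. W (z + b) - W z \<partial>lborel) = 0"
    using lborel_translate[OF iW, of b] iW by (simp add: add.commute)
  with L R lborel_pair.Fubini_integral[OF intG] show ?thesis by simp
qed

lemma grad_works:
  fixes f :: "'a::euclidean_space \<Rightarrow> real"
  assumes "f differentiable (at z)"
  shows "(f has_derivative (\<lambda>h. h \<bullet> grad f z)) (at z)"
proof -
  define F where "F = frechet_derivative f (at z)"
  have d: "(f has_derivative F) (at z)" using assms frechet_derivative_works F_def by blast
  then have lin: "linear F" using has_derivative_linear by blast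
  define g where "g = (\<Sum>b\<in>Basis. F b *\<^sub>R b)"
  have "F h = h \<bullet> g" for h
  proof -
    have "F h = F (\<Sum>b\<in>Basis. (h \<bullet> b) *\<^sub>R b)" by (simp add: euclidean_representation)
    also have "\<dots> = (\<Sum>b\<in>Basis. (h \<bullet> b) * F b)"
      using lin by (simp add: linear_sum linear_scale)
    also have "\<dots> = h \<bullet> g" by (simp add: g_def inner_sum_right mult.commute)
    finally show ?thesis .
  qed
  then have "F = (\<lambda>h. h \<bullet> g)" by auto
  with d have "GDERIV f z :> g" by (simp add: gderiv_def)
  then have "GDERIV f z :> grad f z" unfolding grad_def by (rule someI)
  then show ?thesis by (simp add: gderiv_def)
qed

lemma grad_unique:
  fixes f :: "'a::euclidean_space \<Rightarrow> real"
  assumes "(f has_derivative (\<lambda>h. h \<bullet> g)) (at z)"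
  shows "grad f z = g"
proof -
  have "f differentiable (at z)" using assms differentiable_def by blast
  from has_derivative_unique[OF grad_works[OF this] assms]
  have "\<And>h. h \<bullet> grad f z = h \<bullet> g" by metis
  then have "(grad f z - g) \<bullet> grad f z = (grad f z - g) \<bullet> g" by blast
  then have "(grad f z - g) \<bullet> (grad f z - g) = 0" by (simp add: inner_diff_right)
  then show ?thesis by simp
qed

lemma gauss_differentiable:
  "(gauss \<eta> :: 'a::euclidean_space \<Rightarrow> real) differentiable (at u)"
proof -
  have e: "(\<lambda>x::'a. exp (- \<eta> * (norm x)\<^sup>2 / 2)) = exp \<circ> (\<lambda>x. - \<eta> * (x \<bullet> x) / 2)"
    by (auto simp: power2_norm_eq_inner)
  have "(\<lambda>x::'a. - \<eta> * (x \<bullet> x) / 2) differentiable (at u)"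
  proof -
    have "((\<lambda>x::'a. - \<eta> * (x \<bullet> x) / 2) has_derivative (\<lambda>h. - \<eta> * (u \<bullet> h + h \<bullet> u) / 2)) (at u)"
      by (auto intro!: derivative_eq_intros)
    then show ?thesis unfolding differentiable_def by blast
  qed
  moreover have "exp differentiable (at (- \<eta> * (u \<bullet> u) / 2))"
    using DERIV_exp field_differentiable_def field_differentiable_imp_differentiable by blast
  ultimately have "(\<lambda>x::'a. exp (- \<eta> * (norm x)\<^sup>2 / 2)) differentiable (at u)"
    unfolding e by (rule differentiable_chain_at)
  then show ?thesis unfolding gauss_def by (intro derivative_intros)
qed

lemma gauss_pos: "\<eta> > 0 \<Longrightarrow> gauss \<eta> u > 0"
  unfolding gauss_def by simp

lemma div_zero:
  fixes V :: "'a::euclidean_space \<Rightarrow> 'a"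
  assumes dV: "\<And>z. V differentiable (at z)" and iV: "integrable lborel V"
    and iD: "integrable lborel (\<lambda>z. frechet_derivative V (at z) b \<bullet> b)"
  shows "(\<integral>z. frechet_derivative V (at z) b \<bullet> b \<partial>lborel) = 0"
proof (rule line_integral_zero[where W="\<lambda>z. V z \<bullet> b" and b=b])
  show "integrable lborel (\<lambda>z. V z \<bullet> b)" using iV by (rule integrable_inner_left)
  show "integrable lborel (\<lambda>z. frechet_derivative V (at z) b \<bullet> b)" by (rule iD)
  fix z s
  define F where "F = frechet_derivative V (at (z + s *\<^sub>R b))"
  have 1: "((\<lambda>s. z + s *\<^sub>R b) has_derivative (\<lambda>h. h *\<^sub>R b)) (at s)"
    by (auto intro!: derivative_eq_intros)
  have 2: "(V has_derivative F) (at (z + s *\<^sub>R b))"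
    unfolding F_def using dV frechet_derivative_works by blast
  have lin: "linear F" using 2 has_derivative_linear by blast
  have 3: "((V \<circ> (\<lambda>s. z + s *\<^sub>R b)) has_derivative (F \<circ> (\<lambda>h. h *\<^sub>R b))) (at s)"
    by (rule diff_chain_at[OF 1 2])
  have 4: "((\<lambda>s. (V \<circ> (\<lambda>s. z + s *\<^sub>R b)) s \<bullet> b) has_derivative (\<lambda>h. (F \<circ> (\<lambda>h. h *\<^sub>R b)) h \<bullet> b)) (at s)"
    by (rule bounded_linear.has_derivative[OF bounded_linear_inner_left 3])
  have 5: "(\<lambda>h. F (h *\<^sub>R b) \<bullet> b) = (*) (F b \<bullet> b)"
    using lin by (auto simp: linear_scale)
  have 6: "((\<lambda>s. V (z + s *\<^sub>R b) \<bullet> b) has_derivative (*) (F b \<bullet> b)) (at s)"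
    using 4 unfolding o_def 5 .
  then show "((\<lambda>s. V (z + s *\<^sub>R b) \<bullet> b) has_real_derivative frechet_derivative V (at (z + s *\<^sub>R b)) b \<bullet> b) (at s)"
    unfolding has_field_derivative_def F_def .
qed

lemma prod_div:
  fixes d :: "'a::euclidean_space \<Rightarrow> real" and V :: "'a \<Rightarrow> 'a"
  assumes dd: "d differentiable (at z)" and dV: "V differentiable (at z)"
  shows "(\<Sum>b\<in>Basis. frechet_derivative (\<lambda>w. d w *\<^sub>R V w) (at z) b \<bullet> b) = grad d z \<bullet> V z + d z * divg V z"
proof -
  define F where "F = frechet_derivative V (at z)"
  have 2: "(V has_derivative F) (at z)" unfolding F_def using dV frechet_derivative_works by blast
  have 1: "(d has_derivative (\<lambda>h. h \<bullet> grad d z)) (at z)" by (rule grad_works[OF dd])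
  have "((\<lambda>w. d w *\<^sub>R V w) has_derivative (\<lambda>h. d z *\<^sub>R F h + (h \<bullet> grad d z) *\<^sub>R V z)) (at z)"
    by (rule has_derivative_scaleR[OF 1 2])
  then have e: "frechet_derivative (\<lambda>w. d w *\<^sub>R V w) (at z) = (\<lambda>h. d z *\<^sub>R F h + (h \<bullet> grad d z) *\<^sub>R V z)"
    by (rule frechet_derivative_at[symmetric])
  have "(\<Sum>b\<in>Basis. frechet_derivative (\<lambda>w. d w *\<^sub>R V w) (at z) b \<bullet> b)
     = (\<Sum>b\<in>Basis. d z * (F b \<bullet> b)) + (\<Sum>b\<in>Basis. (b \<bullet> grad d z) * (V z \<bullet> b))"
    unfolding e by (simp add: sum.distrib inner_add_left)
  also have "\<dots> = d z * divg V z + grad d z \<bullet> V z"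
  proof -
    have eq: "grad d z \<bullet> V z = (\<Sum>b\<in>Basis. (b \<bullet> grad d z) * (V z \<bullet> b))"
      by (subst euclidean_inner) (intro sum.cong refl, simp add: inner_commute)
    show ?thesis unfolding eq by (simp add: divg_def F_def sum_distrib_left)
  qed
  finally show ?thesis by simp
qed

lemma deltaF_differentiable:
  fixes p :: "'p \<Rightarrow> 'x::euclidean_space \<Rightarrow> real" and Q :: "'x \<times> 'x \<Rightarrow> real"
  assumes p_pos: "\<forall>\<phi> x. p \<phi> x > 0" and pdx: "\<forall>\<phi> x. (\<lambda>x'. ln (p \<phi> x')) differentiable (at x)"
    and qpos: "\<forall>z. Q z > 0" and qd: "Q differentiable (at z)" and eta: "\<eta>x > 0"
  shows "deltaF p \<eta>x \<theta> Q differentiable (at z)"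
proof -
  have pe: "p \<theta> = exp \<circ> (\<lambda>x'. ln (p \<theta> x'))" using p_pos by (auto simp: fun_eq_iff)
  have pd: "p \<theta> differentiable (at x)" for x
  proof -
    have "exp differentiable (at (ln (p \<theta> x)))"
      using DERIV_exp field_differentiable_def field_differentiable_imp_differentiable by blast
    then show ?thesis by (subst pe, intro differentiable_chain_at) (use pdx in auto)
  qed
  have "(p \<theta> \<circ> fst) differentiable (at z)"
    by (intro differentiable_chain_at pd bounded_linear_imp_differentiable bounded_linear_fst)
  moreover have "(gauss \<eta>x \<circ> snd) differentiable (at z)"
    by (intro differentiable_chain_at gauss_differentiable bounded_linear_imp_differentiable bounded_linear_snd)
  ultimately have rd: "rho p \<eta>x \<theta> differentiable (at z)"
    unfolding rho_def[abs_def] o_def by (intro differentiable_mult) auto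
  have rpos: "rho p \<eta>x \<theta> w > 0" for w
    unfolding rho_def by (intro mult_pos_pos) (auto simp: p_pos gauss_pos[OF eta])
  have qr: "(\<lambda>w. Q w / rho p \<eta>x \<theta> w) differentiable (at z)"
    using rd qd rpos[of z] by (intro differentiable_divide) auto
  have "ln differentiable (at (Q z / rho p \<eta>x \<theta> z))"
    using DERIV_ln[of "Q z / rho p \<eta>x \<theta> z"] qpos rpos
    by (metis divide_pos_pos field_differentiable_def field_differentiable_imp_differentiable)
  then have "(ln \<circ> (\<lambda>w. Q w / rho p \<eta>x \<theta> w)) differentiable (at z)"
    by (intro differentiable_chain_at qr)
  then show ?thesis unfolding deltaF_def[abs_def] o_def by (intro differentiable_add) auto
qed

lemma ibp:
  fixes d :: "'a::euclidean_space \<Rightarrow> real" and V :: "'a \<Rightarrow> 'a"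
  assumes dd: "\<forall>z. d differentiable (at z)" and dV: "\<forall>z. V differentiable (at z)"
    and i1: "integrable lborel (\<lambda>z. d z *\<^sub>R V z)"
    and i2: "\<forall>b\<in>Basis. integrable lborel (\<lambda>z. frechet_derivative (\<lambda>w. d w *\<^sub>R V w) (at z) b \<bullet> b)"
    and i3: "integrable lborel (\<lambda>z. grad d z \<bullet> V z)"
  shows "integrable lborel (\<lambda>z. d z * divg V z)"
    and "(\<integral>z. d z * divg V z \<partial>lborel) = - (\<integral>z. grad d z \<bullet> V z \<partial>lborel)"
proof -
  define S where "S = (\<lambda>z. \<Sum>b\<in>Basis. frechet_derivative (\<lambda>w. d w *\<^sub>R V w) (at z) b \<bullet> b)"
  have iS: "integrable lborel S" unfolding S_def
    using Bochner_Integration.integrable_sum[where I=Basis and M=lborel and f="\<lambda>b z. frechet_derivative (\<lambda>w. d w *\<^sub>R V w) (at z) b \<bullet> b"] i2 by simp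
  have dp: "(\<lambda>w. d w *\<^sub>R V w) differentiable (at z)" for z using dd dV by (intro differentiable_scaleR) auto
  have S0: "integral\<^sup>L lborel S = 0"
  proof -
    have "integral\<^sup>L lborel S = (\<Sum>b\<in>Basis. \<integral>z. frechet_derivative (\<lambda>w. d w *\<^sub>R V w) (at z) b \<bullet> b \<partial>lborel)"
      unfolding S_def using Bochner_Integration.integral_sum[where I=Basis and M=lborel and f="\<lambda>b z. frechet_derivative (\<lambda>w. d w *\<^sub>R V w) (at z) b \<bullet> b"] i2 by simp
    also have "\<dots> = 0"
      by (rule sum.neutral) (use i2 i1 dp div_zero in auto)
    finally show ?thesis .
  qed
  have eq: "(\<lambda>z. d z * divg V z) = (\<lambda>z. S z - grad d z \<bullet> V z)"
    unfolding S_def using dd dV by (auto simp: prod_div)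
  show "integrable lborel (\<lambda>z. d z * divg V z)" unfolding eq using iS i3 by auto
  show "(\<integral>z. d z * divg V z \<partial>lborel) = - (\<integral>z. grad d z \<bullet> V z \<partial>lborel)"
    unfolding eq using iS i3 S0 by simp
qed

lemma pointwise_deriv:
  fixes p :: "'p::euclidean_space \<Rightarrow> 'x::euclidean_space \<Rightarrow> real"
    and \<theta> :: "real \<Rightarrow> 'p" and q :: "real \<Rightarrow> 'x \<times> 'x \<Rightarrow> real"
  assumes p_pos: "\<forall>\<phi> x. p \<phi> x > 0"
    and pdt: "\<forall>\<phi> x. (\<lambda>\<phi>'. ln (p \<phi>' x)) differentiable (at \<phi>)"
    and qpos: "\<forall>s\<ge>0. q s z > 0" and eta: "\<eta>x > 0" and s0: "s \<ge> 0"
    and h\<theta>: "(\<theta> has_vector_derivative v) (at s within {0..})"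
    and hq: "((\<lambda>s. q s z) has_real_derivative Q') (at s within {0..})"
  shows "((\<lambda>s. ln (q s z / rho p \<eta>x (\<theta> s) z) * q s z) has_real_derivative
           ((ln (q s z / rho p \<eta>x (\<theta> s) z) + 1) * Q' - q s z * (grad_theta p (\<theta> s) (fst z) \<bullet> v)))
         (at s within {0..})"
proof -
  define x where "x = fst z"
  define u where "u = snd z"
  define g where "g = grad_theta p (\<theta> s) x"
  have L: "((\<lambda>\<phi>. ln (p \<phi> x)) has_derivative (\<lambda>h. h \<bullet> g)) (at (\<theta> s))"
    unfolding g_def grad_theta_def using pdt by (intro grad_works) auto
  have T: "(\<theta> has_derivative (\<lambda>h. h *\<^sub>R v)) (at s within {0..})"
    using h\<theta> by (simp add: has_vector_derivative_def)
  have "((\<lambda>s. ln (p (\<theta> s) x)) has_derivative (\<lambda>h. (h *\<^sub>R v) \<bullet> g)) (at s within {0..})"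
    by (rule has_derivative_in_compose[OF T has_derivative_at_withinI[OF L]])
  then have L2: "((\<lambda>s. ln (p (\<theta> s) x)) has_real_derivative (v \<bullet> g)) (at s within {0..})"
    by (simp add: has_field_derivative_def mult.commute[of _ "v \<bullet> g"] )
  have Lq: "((\<lambda>s. ln (q s z)) has_real_derivative inverse (q s z) * Q') (at s within {0..})"
    by (rule DERIV_chain2[OF DERIV_ln hq]) (use qpos s0 in auto)
  have G: "((\<lambda>s. (ln (q s z) - ln (p (\<theta> s) x) - ln (gauss \<eta>x u)) * q s z) has_real_derivative
            ((inverse (q s z) * Q' - v \<bullet> g - 0) * q s z + Q' * (ln (q s z) - ln (p (\<theta> s) x) - ln (gauss \<eta>x u))))
         (at s within {0..})"
    by (rule DERIV_mult[OF DERIV_diff[OF DERIV_diff[OF Lq L2] DERIV_const] hq])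
  have lnr: "ln (q s' z / rho p \<eta>x (\<theta> s') z) = ln (q s' z) - ln (p (\<theta> s') x) - ln (gauss \<eta>x u)"
    if "s' \<ge> 0" for s'
  proof -
    have "q s' z > 0" "p (\<theta> s') x > 0" "gauss \<eta>x u > 0"
      using qpos that p_pos gauss_pos[OF eta] by auto
    then show ?thesis by (simp add: rho_def x_def u_def ln_div ln_mult)
  qed
  have G2: "((\<lambda>s. ln (q s z / rho p \<eta>x (\<theta> s) z) * q s z) has_real_derivative
            ((inverse (q s z) * Q' - v \<bullet> g - 0) * q s z + Q' * (ln (q s z) - ln (p (\<theta> s) x) - ln (gauss \<eta>x u))))
         (at s within {0..})"
    by (rule has_field_derivative_transform_within[OF G zero_less_one]) (use s0 lnr in auto)
  show ?thesis
  proof (rule DERIV_cong[OF G2])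
    have "q s z \<noteq> 0" using qpos s0 by (metis less_irrefl)
    then show "(inverse (q s z) * Q' - v \<bullet> g - 0) * q s z + Q' * (ln (q s z) - ln (p (\<theta> s) x) - ln (gauss \<eta>x u)) =
      (ln (q s z / rho p \<eta>x (\<theta> s) z) + 1) * Q' - q s z * (grad_theta p (\<theta> s) (fst z) \<bullet> v)"
      unfolding lnr[OF s0] by (simp add: g_def x_def algebra_simps inner_commute)
  qed
qed

lemma deriv_under_integral:
  fixes f f' :: "real \<Rightarrow> 'a \<Rightarrow> real" and g :: "'a \<Rightarrow> real"
  assumes pw: "\<And>s z. s \<ge> 0 \<Longrightarrow> ((\<lambda>s. f s z) has_real_derivative f' s z) (at s within {0..})"
    and fi: "\<And>s. s \<ge> 0 \<Longrightarrow> integrable M (f s)"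
    and e: "e > 0" and ig: "integrable M g"
    and bd: "\<And>s z. s \<in> {t-e..t+e} \<inter> {0..} \<Longrightarrow> \<bar>f' s z\<bar> \<le> g z"
    and t: "t \<ge> 0"
  shows "integrable M (f' t)"
    and "((\<lambda>s. integral\<^sup>L M (f s)) has_real_derivative integral\<^sup>L M (f' t)) (at t within {0..})"
proof -
  define C where "C = {t-e..t+e} \<inter> {0::real..}"
  have cC: "convex C" unfolding C_def by (intro convex_Int convex_real_interval)
  have tC: "t \<in> C" unfolding C_def using t e by auto
  have lip: "\<bar>f y z - f t z\<bar> \<le> g z * \<bar>y - t\<bar>" if "y \<in> C" for y z
  proof -
    have "norm (f y z - f t z) \<le> g z * norm (y - t)"
    proof (rule field_differentiable_bound[OF cC, where f="\<lambda>s. f s z" and f'="\<lambda>s. f' s z"])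
      fix w assume w: "w \<in> C"
      then have "w \<ge> 0" unfolding C_def by auto
      from pw[OF this] show "((\<lambda>s. f s z) has_field_derivative f' w z) (at w within C)"
        by (rule has_field_derivative_subset) (auto simp: C_def)
      show "norm (f' w z) \<le> g z" using bd w unfolding C_def by auto
    qed (use that tC in auto)
    then show ?thesis by simp
  qed
  have meas_lim: "\<And>Y. (\<forall>n. Y n \<in> {0..} \<and> Y n \<noteq> t) \<Longrightarrow> Y \<longlonglongrightarrow> t \<Longrightarrow>
      (\<lambda>n. (f (Y n) z - f t z) / (Y n - t)) \<longlonglongrightarrow> f' t z" for z
  proof -
    fix Y :: "nat \<Rightarrow> real" assume Y: "\<forall>n. Y n \<in> {0..} \<and> Y n \<noteq> t" "Y \<longlonglongrightarrow> t"
    have fl: "filterlim Y (at t within {0..}) sequentially"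
      using Y by (auto simp: filterlim_at)
    have "((\<lambda>y. (f y z - f t z) / (y - t)) \<longlongrightarrow> f' t z) (at t within {0..})"
      using pw[OF t, of z] by (simp add: has_field_derivative_iff)
    from filterlim_compose[OF this fl] show "(\<lambda>n. (f (Y n) z - f t z) / (Y n - t)) \<longlonglongrightarrow> f' t z" .
  qed
  have Ex: "\<exists>Y. (\<forall>n. Y n \<in> {0..} \<and> Y n \<noteq> t) \<and> Y \<longlonglongrightarrow> t"
  proof (intro exI conjI)
    show "\<forall>n. t + inverse (real (Suc n)) \<in> {0..} \<and> t + inverse (real (Suc n)) \<noteq> t" using t by auto
    show "(\<lambda>n. t + inverse (real (Suc n))) \<longlonglongrightarrow> t"
      using tendsto_add[OF tendsto_const[of t] LIMSEQ_inverse_real_of_nat] by simp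
  qed
  have mf': "f' t \<in> borel_measurable M"
  proof -
    from Ex obtain Y where Y: "\<forall>n. Y n \<in> {0..} \<and> Y n \<noteq> t" "Y \<longlonglongrightarrow> t" by blast
    show ?thesis
    proof (rule borel_measurable_LIMSEQ_metric)
      fix n show "(\<lambda>z. (f (Y n) z - f t z) / (Y n - t)) \<in> borel_measurable M"
        using fi[of "Y n"] fi[OF t] Y by (auto intro!: borel_measurable_divide borel_measurable_diff)
      fix z show "(\<lambda>n. (f (Y n) z - f t z) / (Y n - t)) \<longlonglongrightarrow> f' t z" using meas_lim[OF Y] .
    qed
  qed
  show "integrable M (f' t)"
  proof (rule Bochner_Integration.integrable_bound[OF ig mf'])
    show "AE z in M. norm (f' t z) \<le> norm (g z)" using bd[OF tC[unfolded C_def]] by (auto intro!: AE_I2 order_trans[OF _ abs_ge_self])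
  qed
  show "((\<lambda>s. integral\<^sup>L M (f s)) has_real_derivative integral\<^sup>L M (f' t)) (at t within {0..})"
    unfolding has_field_derivative_iff
  proof (rule Lim_within_LIMSEQ, intro allI impI)
    fix S :: "nat \<Rightarrow> real" assume S: "(\<forall>n. S n \<noteq> t \<and> S n \<in> {0..}) \<and> S \<longlonglongrightarrow> t"
    obtain N where N: "\<And>n. n \<ge> N \<Longrightarrow> norm (S n - t) < e" using LIMSEQ_D[of S t e] S e by blast
    define Y where "Y n = S (n + N)" for n
    have YC: "Y n \<in> C" for n using N[of "n + N"] S unfolding Y_def C_def by (auto simp: abs_if split: if_splits)
    have Y: "\<forall>n. Y n \<in> {0..} \<and> Y n \<noteq> t" "Y \<longlonglongrightarrow> t"
      using S LIMSEQ_ignore_initial_segment[of S t N] unfolding Y_def by auto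
    have lim: "(\<lambda>n. \<integral>z. (f (Y n) z - f t z) / (Y n - t) \<partial>M) \<longlonglongrightarrow> integral\<^sup>L M (f' t)"
    proof (rule integral_dominated_convergence[OF mf' _ ig])
      fix n show "(\<lambda>z. (f (Y n) z - f t z) / (Y n - t)) \<in> borel_measurable M"
        using fi[of "Y n"] fi[OF t] Y by (auto intro!: borel_measurable_divide borel_measurable_diff)
      show "AE z in M. (\<lambda>n. (f (Y n) z - f t z) / (Y n - t)) \<longlonglongrightarrow> f' t z"
        using meas_lim[OF Y] by auto
      show "AE z in M. norm ((f (Y n) z - f t z) / (Y n - t)) \<le> g z"
      proof (rule AE_I2)
        fix z
        have "\<bar>Y n - t\<bar> > 0" using Y by auto
        with lip[OF YC[of n], of z] show "norm ((f (Y n) z - f t z) / (Y n - t)) \<le> g z"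
          by (simp add: abs_divide divide_le_eq)
      qed
    qed
    have eq: "(\<integral>z. (f (Y n) z - f t z) / (Y n - t) \<partial>M) = (integral\<^sup>L M (f (Y n)) - integral\<^sup>L M (f t)) / (Y n - t)" for n
      using fi[of "Y n"] fi[OF t] Y by (simp add: integral_diff)
    have "(\<lambda>n. (integral\<^sup>L M (f (Y n)) - integral\<^sup>L M (f t)) / (Y n - t)) \<longlonglongrightarrow> integral\<^sup>L M (f' t)"
      using lim unfolding eq .
    then have "(\<lambda>n. (integral\<^sup>L M (f (S (n + N))) - integral\<^sup>L M (f t)) / (S (n + N) - t)) \<longlonglongrightarrow> integral\<^sup>L M (f' t)"
      unfolding Y_def .
    then show "(\<lambda>n. (integral\<^sup>L M (f (S n)) - integral\<^sup>L M (f t)) / (S n - t)) \<longlonglongrightarrow> integral\<^sup>L M (f' t)"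
      by (rule LIMSEQ_offset)
  qed
qed

theorem propositionE1:
  fixes p :: "'p::euclidean_space \<Rightarrow> 'x::euclidean_space \<Rightarrow> real"
    and \<theta> m :: "real \<Rightarrow> 'p"
    and q :: "real \<Rightarrow> 'x \<times> 'x \<Rightarrow> real"
    and \<eta>\<theta> \<eta>x \<gamma>\<theta> \<gamma>x :: real
  assumes eta_theta: "\<eta>\<theta> > 0" and eta_x: "\<eta>x > 0"
    and gamma_theta: "\<gamma>\<theta> \<ge> 0" and gamma_x: "\<gamma>x \<ge> 0"
    and flow: "momentum_flow p \<eta>\<theta> \<eta>x \<gamma>\<theta> \<gamma>x \<theta> m q"
    and p_pos: "\<forall>\<phi> x. p \<phi> x > 0"
    and p_diff_theta: "\<forall>\<phi> x. (\<lambda>\<phi>'. ln (p \<phi>' x)) differentiable (at \<phi>)"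
    and p_diff_x: "\<forall>\<phi> x. (\<lambda>x'. ln (p \<phi> x')) differentiable (at x)"
    and q_pos: "\<forall>t\<ge>0. \<forall>z. q t z > 0"
    and q_diff: "\<forall>t\<ge>0. \<forall>z. q t differentiable (at z)"
    and flux_diff: "\<forall>t\<ge>0. \<forall>z. flux p \<eta>x \<gamma>x (\<theta> t) (q t) differentiable (at z)"
    and q_prob: "\<forall>t\<ge>0. integrable lborel (q t) \<and> (\<integral>z. q t z \<partial>lborel) = 1
                   \<and> integrable lborel (\<lambda>z. norm z ^ 2 * q t z)"
    and F_int: "\<forall>t\<ge>0. integrable lborel (\<lambda>z. ln (q t z / rho p \<eta>x (\<theta> t) z) * q t z)"
    and grad_int: "\<forall>t\<ge>0. integrable lborel (\<lambda>z. q t z *\<^sub>R grad_theta p (\<theta> t) (fst z))"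
    and dominated: "\<forall>t\<ge>0. \<exists>e>0. \<exists>g. integrable lborel g \<and>
          (\<forall>s\<in>{t - e..t + e} \<inter> {0..}. \<forall>z.
             \<bar>deltaF p \<eta>x (\<theta> s) (q s) z * divg (flux p \<eta>x \<gamma>x (\<theta> s) (q s)) z
              - q s z * (grad_theta p (\<theta> s) (fst z) \<bullet> (\<eta>\<theta> *\<^sub>R m s))\<bar> \<le> g z)"
    and boundary: "\<forall>t\<ge>0.
          integrable lborel (\<lambda>z. deltaF p \<eta>x (\<theta> t) (q t) z *\<^sub>R flux p \<eta>x \<gamma>x (\<theta> t) (q t) z) \<and>
          (\<forall>b\<in>Basis. integrable lborel (\<lambda>z. frechet_derivative
              (\<lambda>w. deltaF p \<eta>x (\<theta> t) (q t) w *\<^sub>R flux p \<eta>x \<gamma>x (\<theta> t) (q t) w) (at z) b \<bullet> b)) \<and>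
          integrable lborel (\<lambda>z. grad (deltaF p \<eta>x (\<theta> t) (q t)) z \<bullet> flux p \<eta>x \<gamma>x (\<theta> t) (q t) z)"
  shows "(\<forall>t\<ge>0.
            ((\<lambda>s. Fcal p \<eta>x \<eta>\<theta> (\<theta> s) (m s) (q s)) has_real_derivative
               (- \<gamma>\<theta> * norm (grad (\<lambda>m'. Fcal p \<eta>x \<eta>\<theta> (\<theta> t) m' (q t)) (m t)) ^ 2
                - \<gamma>x * (\<integral>z. norm (snd (grad (deltaF p \<eta>x (\<theta> t) (q t)) z)) ^ 2 * q t z \<partial>lborel)))
              (at t within {0..})
          \<and> - \<gamma>\<theta> * norm (grad (\<lambda>m'. Fcal p \<eta>x \<eta>\<theta> (\<theta> t) m' (q t)) (m t)) ^ 2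
                - \<gamma>x * (\<integral>z. norm (snd (grad (deltaF p \<eta>x (\<theta> t) (q t)) z)) ^ 2 * q t z \<partial>lborel) \<le> 0)
        \<and> (\<forall>s t. 0 \<le> s \<longrightarrow> s \<le> t \<longrightarrow>
              Fcal p \<eta>x \<eta>\<theta> (\<theta> t) (m t) (q t) \<le> Fcal p \<eta>x \<eta>\<theta> (\<theta> s) (m s) (q s))"
proof -
  define f where "f = (\<lambda>s z. ln (q s z / rho p \<eta>x (\<theta> s) z) * q s z)"
  define f' where "f' = (\<lambda>s z. deltaF p \<eta>x (\<theta> s) (q s) z * divg (flux p \<eta>x \<gamma>x (\<theta> s) (q s)) z
       - q s z * (grad_theta p (\<theta> s) (fst z) \<bullet> (\<eta>\<theta> *\<^sub>R m s)))"
  define I where "I = (\<lambda>s. \<integral>z. q s z *\<^sub>R grad_theta p (\<theta> s) (fst z) \<partial>lborel)"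
  define mv where "mv = (\<lambda>s. I s - (\<gamma>\<theta> * \<eta>\<theta>) *\<^sub>R m s)"
  define J where "J = (\<lambda>t. \<integral>z. norm (snd (grad (deltaF p \<eta>x (\<theta> t) (q t)) z)) ^ 2 * q t z \<partial>lborel)"
  define Fs where "Fs = (\<lambda>s. Fcal p \<eta>x \<eta>\<theta> (\<theta> s) (m s) (q s))"
  define Gm where "Gm = (\<lambda>t. grad (\<lambda>m'. Fcal p \<eta>x \<eta>\<theta> (\<theta> t) m' (q t)) (m t))"
  have fl: "(\<theta> has_vector_derivative \<eta>\<theta> *\<^sub>R m t) (at t within {0..}) \<and>
      (m has_vector_derivative mv t) (at t within {0..}) \<and>
      (\<forall>z. ((\<lambda>s. q s z) has_real_derivative divg (flux p \<eta>x \<gamma>x (\<theta> t) (q t)) z) (at t within {0..}))"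
    if "t \<ge> 0" for t
    using flow that unfolding momentum_flow_def mv_def I_def by blast
  have pw: "((\<lambda>s. f s z) has_real_derivative f' s z) (at s within {0..})" if s: "s \<ge> 0" for s z
  proof -
    have qz: "\<forall>s\<ge>0. q s z > 0" using q_pos by blast
    have fs: "(\<theta> has_vector_derivative \<eta>\<theta> *\<^sub>R m s) (at s within {0..})"
      and qs: "((\<lambda>s. q s z) has_real_derivative divg (flux p \<eta>x \<gamma>x (\<theta> s) (q s)) z) (at s within {0..})"
      using fl[OF s] by blast+
    show ?thesis
      using pointwise_deriv[where p=p and q=q and z=z and \<theta>=\<theta> and s=s, OF p_pos p_diff_theta qz eta_x s fs qs]
      unfolding f_def f'_def deltaF_def .
  qed
  have fi: "integrable lborel (f s)" if "s \<ge> 0" for s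
    using F_int that unfolding f_def by blast
  have key: "(Fs has_real_derivative (- \<gamma>\<theta> * norm (Gm t) ^ 2 - \<gamma>x * J t)) (at t within {0..})"
    if t: "t \<ge> 0" for t
  proof -
    obtain e g where e: "e > 0" and ig: "integrable lborel g" and bd0: "\<forall>s\<in>{t - e..t + e} \<inter> {0..}. \<forall>z.
             \<bar>deltaF p \<eta>x (\<theta> s) (q s) z * divg (flux p \<eta>x \<gamma>x (\<theta> s) (q s)) z
              - q s z * (grad_theta p (\<theta> s) (fst z) \<bullet> (\<eta>\<theta> *\<^sub>R m s))\<bar> \<le> g z"
      using dominated t by blast
    have bd: "\<bar>f' s z\<bar> \<le> g z" if "s \<in> {t-e..t+e} \<inter> {0..}" for s z
      using bd0 that unfolding f'_def by blast
    note DU = deriv_under_integral[where f=f and f'=f', OF pw fi e ig bd t]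
    define d where "d = deltaF p \<eta>x (\<theta> t) (q t)"
    define V where "V = flux p \<eta>x \<gamma>x (\<theta> t) (q t)"
    have dd: "\<forall>z. d differentiable (at z)"
      unfolding d_def using deltaF_differentiable[OF p_pos p_diff_x _ _ eta_x] q_pos q_diff t by blast
    have dV: "\<forall>z. V differentiable (at z)" using flux_diff t unfolding V_def by blast
    have b1: "integrable lborel (\<lambda>z. d z *\<^sub>R V z)"
      and b2: "\<forall>b\<in>Basis. integrable lborel (\<lambda>z. frechet_derivative (\<lambda>w. d w *\<^sub>R V w) (at z) b \<bullet> b)"
      and b3: "integrable lborel (\<lambda>z. grad d z \<bullet> V z)"
      using boundary t unfolding d_def V_def by blast+
    note IBP = ibp[OF dd dV b1 b2 b3]
    have gV: "grad d z \<bullet> V z = \<gamma>x * (norm (snd (grad d z)) ^ 2 * q t z)" for z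
      unfolding V_def flux_def d_def[symmetric]
      by (simp add: Dmat_def inner_prod_def power2_norm_eq_inner inner_commute algebra_simps)
    have eqf': "f' t = (\<lambda>z. d z * divg V z - (q t z *\<^sub>R grad_theta p (\<theta> t) (fst z)) \<bullet> (\<eta>\<theta> *\<^sub>R m t))"
      by (simp add: f'_def d_def V_def fun_eq_iff)
    have i2: "integrable lborel (\<lambda>z. (q t z *\<^sub>R grad_theta p (\<theta> t) (fst z)) \<bullet> (\<eta>\<theta> *\<^sub>R m t))"
      by (rule integrable_inner_left) (use grad_int t in blast)
    have intgV: "(\<integral>z. grad d z \<bullet> V z \<partial>lborel) = \<gamma>x * J t"
      unfolding gV by (simp add: J_def d_def)
    have intf': "integral\<^sup>L lborel (f' t) = - \<gamma>x * J t - I t \<bullet> (\<eta>\<theta> *\<^sub>R m t)"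
    proof -
      have i3: "(\<integral>z. (q t z *\<^sub>R grad_theta p (\<theta> t) (fst z)) \<bullet> (\<eta>\<theta> *\<^sub>R m t) \<partial>lborel) = I t \<bullet> (\<eta>\<theta> *\<^sub>R m t)"
        unfolding I_def by (rule integral_inner_left) (use grad_int t in blast)
      have "integral\<^sup>L lborel (f' t) = (\<integral>z. d z * divg V z \<partial>lborel) - (\<integral>z. (q t z *\<^sub>R grad_theta p (\<theta> t) (fst z)) \<bullet> (\<eta>\<theta> *\<^sub>R m t) \<partial>lborel)"
        unfolding eqf' by (rule Bochner_Integration.integral_diff[OF IBP(1) i2])
      also have "\<dots> = - \<gamma>x * J t - I t \<bullet> (\<eta>\<theta> *\<^sub>R m t)"
        unfolding i3 IBP(2) intgV by simp
      finally show ?thesis .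
    qed
    have Dm: "((\<lambda>s. \<eta>\<theta> / 2 * (m s \<bullet> m s)) has_real_derivative \<eta>\<theta> / 2 * (2 * (m t \<bullet> mv t))) (at t within {0..})"
    proof -
      have hm: "(m has_derivative (\<lambda>h. h *\<^sub>R mv t)) (at t within {0..})"
        using fl[OF t] by (simp add: has_vector_derivative_def)
      have "((\<lambda>s. m s \<bullet> m s) has_derivative (\<lambda>h. m t \<bullet> (h *\<^sub>R mv t) + (h *\<^sub>R mv t) \<bullet> m t)) (at t within {0..})"
        by (rule has_derivative_inner[OF hm hm])
      moreover have "(\<lambda>h. m t \<bullet> (h *\<^sub>R mv t) + (h *\<^sub>R mv t) \<bullet> m t) = (*) (2 * (m t \<bullet> mv t))"
        by (auto simp: fun_eq_iff inner_commute algebra_simps)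
      ultimately have "((\<lambda>s. m s \<bullet> m s) has_real_derivative 2 * (m t \<bullet> mv t)) (at t within {0..})"
        by (simp add: has_field_derivative_def)
      then show ?thesis by (rule DERIV_cmult)
    qed
    have gradF: "Gm t = \<eta>\<theta> *\<^sub>R m t"
    proof -
      have e1: "(\<lambda>m'. Fcal p \<eta>x \<eta>\<theta> (\<theta> t) m' (q t)) = (\<lambda>m'. integral\<^sup>L lborel (f t) + \<eta>\<theta> / 2 * (m' \<bullet> m'))"
        by (simp add: fun_eq_iff Fcal_def f_def power2_norm_eq_inner)
      have "((\<lambda>m'. integral\<^sup>L lborel (f t) + \<eta>\<theta> / 2 * (m' \<bullet> m')) has_derivative
             (\<lambda>h. 0 + \<eta>\<theta> / 2 * (m t \<bullet> h + h \<bullet> m t))) (at (m t))"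
        by (intro has_derivative_add has_derivative_const has_derivative_mult_right has_derivative_inner has_derivative_ident)
      moreover have "(\<lambda>h. 0 + \<eta>\<theta> / 2 * (m t \<bullet> h + h \<bullet> m t)) = (\<lambda>h. h \<bullet> (\<eta>\<theta> *\<^sub>R m t))"
        by (auto simp: fun_eq_iff inner_commute algebra_simps)
      ultimately show ?thesis unfolding Gm_def e1 by (intro grad_unique) simp
    qed
    have nG: "norm (\<eta>\<theta> *\<^sub>R m t) ^ 2 = \<eta>\<theta> ^ 2 * (m t \<bullet> m t)"
      by (simp only: norm_scaleR power_mult_distrib power2_abs power2_norm_eq_inner)
    have eF: "Fs = (\<lambda>s. integral\<^sup>L lborel (f s) + \<eta>\<theta> / 2 * (m s \<bullet> m s))"
      by (simp add: fun_eq_iff Fs_def Fcal_def f_def power2_norm_eq_inner)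
    show ?thesis unfolding eF
    proof (rule DERIV_cong[OF DERIV_add[OF DU(2) Dm]])
      show "integral\<^sup>L lborel (f' t) + \<eta>\<theta> / 2 * (2 * (m t \<bullet> mv t)) = - \<gamma>\<theta> * (norm (Gm t))\<^sup>2 - \<gamma>x * J t"
        unfolding intf' gradF mv_def nG
        by (simp add: inner_diff_right inner_commute power_mult_distrib power2_norm_eq_inner algebra_simps power2_eq_square)
    qed
  qed
  have nonpos: "- \<gamma>\<theta> * norm (Gm t) ^ 2 - \<gamma>x * J t \<le> 0" if t: "t \<ge> 0" for t
  proof -
    have qn: "0 \<le> q t z" for z using q_pos t less_imp_le by blast
    have "J t \<ge> 0" unfolding J_def
      by (rule integral_nonneg_AE, rule AE_I2, rule mult_nonneg_nonneg[OF zero_le_power2 qn])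
    moreover have "\<gamma>\<theta> * norm (Gm t) ^ 2 \<ge> 0" using gamma_theta by simp
    moreover have "\<gamma>x * J t \<ge> 0" using gamma_x calculation(1) by simp
    ultimately show ?thesis by linarith
  qed
  have mono: "Fs t \<le> Fs s" if st: "0 \<le> s" "s \<le> t" for s t
  proof (rule DERIV_nonpos_imp_decreasing_open[OF st(2)])
    fix x assume x: "s < x" "x < t"
    then have x0: "x \<in> {0<..}" using st by auto
    have "(Fs has_real_derivative (- \<gamma>\<theta> * norm (Gm x) ^ 2 - \<gamma>x * J x)) (at x within {0<..})"
      by (rule has_field_derivative_subset[OF key]) (use x0 in auto)
    then have "(Fs has_real_derivative (- \<gamma>\<theta> * norm (Gm x) ^ 2 - \<gamma>x * J x)) (at x)"
      using at_within_open[OF x0 open_greaterThan] by simp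
    then show "\<exists>y. (Fs has_real_derivative y) (at x) \<and> y \<le> 0" using nonpos[of x] x0 by auto
  next
    show "continuous_on {s..t} Fs"
      unfolding continuous_on_eq_continuous_within
    proof
      fix x assume "x \<in> {s..t}"
      then have x0: "x \<ge> 0" using st by auto
      have "continuous (at x within {0..}) Fs" by (rule DERIV_continuous[OF key[OF x0]])
      then show "continuous (at x within {s..t}) Fs" by (rule continuous_within_subset) (use st in auto)
    qed
  qed
  show ?thesis
    using key nonpos mono unfolding Fs_def Gm_def J_def by blast
qed

end
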